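(* Let $n\ge1$, $C>0$ and $D<0$ be integers. Then there is a one-to-one correspondence between the set of integers $m$ with $0\le m<2nC$ and $m^2\equiv D\pmod{4nC}$, and the set of $\Gamma_0(n)$-orbits in $\mathcal{Q}_n(C,D)$.
   Context: $\mathcal{Q}_n(C,D)$ is the set of triples $(Q;r,t)$ where $Q(x,y)=n\alpha x^2+\beta xy+\gamma y^2$ with $\alpha,\beta,\gamma\in\mathbb{Z}$, $\alpha,\gamma>0$, discriminant $\beta^2-4n\alpha\gamma=D$, and $r,t$ are integers with $n\mid t$, $\gcd(r,t)=1$ and $Q(r,t)=nC$. $\Gamma_0(n)=\{\left(\begin{smallmatrix}a&b\\c&d\end{smallmatrix}\right)\in\mathrm{SL}_2(\mathbb{Z}): n\mid c\}$ acts on $\mathcal{Q}_n(C,D)$ by sending $(Q;r,t)$ to $(Q';dr-bt,-cr+at)$ where $Q'(x,y)=Q(ax+by,cx+dy)$. *)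

theory Defs
  imports Main "HOL-Number_Theory.Cong"
begin

text \<open>A triple (Q;r,t) with Q(x,y) = n*alpha*x^2 + beta*x*y + gamma*y^2 is encoded
  as the tuple (alpha, beta, gamma, r, t) of integers.\<close>

type_synonym triple = "int \<times> int \<times> int \<times> int \<times> int"

definition qform :: "int \<Rightarrow> int \<Rightarrow> int \<Rightarrow> int \<Rightarrow> int \<Rightarrow> int \<Rightarrow> int" where
  "qform n \<alpha> \<beta> \<gamma> x y = n * \<alpha> * x^2 + \<beta> * x * y + \<gamma> * y^2"

definition Qn :: "int \<Rightarrow> int \<Rightarrow> int \<Rightarrow> triple set" where
  "Qn n C D = {(\<alpha>, \<beta>, \<gamma>, r, t). \<alpha> > 0 \<and> \<gamma> > 0 \<and> \<beta>^2 - 4 * n * \<alpha> * \<gamma> = D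
      \<and> n dvd t \<and> gcd r t = 1 \<and> qform n \<alpha> \<beta> \<gamma> r t = n * C}"

definition Gamma0 :: "int \<Rightarrow> (int \<times> int \<times> int \<times> int) set" where
  "Gamma0 n = {(a, b, c, d). a * d - b * c = 1 \<and> n dvd c}"

text \<open>Action: Q'(x,y) = Q(ax+by, cx+dy). Its x^2 coefficient is
  n*alpha*a^2 + beta*a*c + gamma*c^2, which is divisible by n because n divides c,
  so alpha' is that coefficient divided by n.\<close>
definition act :: "int \<Rightarrow> int \<times> int \<times> int \<times> int \<Rightarrow> triple \<Rightarrow> triple" where
  "act n g q = (case g of (a, b, c, d) \<Rightarrow> case q of (\<alpha>, \<beta>, \<gamma>, r, t) \<Rightarrow>
     ((n * \<alpha> * a^2 + \<beta> * a * c + \<gamma> * c^2) div n,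
      2 * n * \<alpha> * a * b + \<beta> * (a * d + b * c) + 2 * \<gamma> * c * d,
      n * \<alpha> * b^2 + \<beta> * b * d + \<gamma> * d^2,
      d * r - b * t,
      - c * r + a * t))"

definition orbit :: "int \<Rightarrow> triple \<Rightarrow> triple set" where
  "orbit n q = (\<lambda>g. act n g q) ` Gamma0 n"

definition orbits :: "int \<Rightarrow> int \<Rightarrow> int \<Rightarrow> triple set set" where
  "orbits n C D = orbit n ` Qn n C D"

end

theory Submission
  imports Defs
begin

definition mm :: "int \<times> int \<times> int \<times> int \<Rightarrow> int \<times> int \<times> int \<times> int \<Rightarrow> int \<times> int \<times> int \<times> int" where
  "mm g h = (case g of (a,b,c,d) \<Rightarrow> case h of (a',b',c',d') \<Rightarrow>
     (a*a' + b*c', a*b' + b*d', c*a' + d*c', c*b' + d*d'))"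

lemma divn:
  fixes n a c \<alpha> \<beta> \<gamma> :: int
  assumes "n dvd c" "n \<noteq> 0"
  shows "n * ((n*\<alpha>*a^2 + \<beta>*a*c + \<gamma>*c^2) div n) = n*\<alpha>*a^2 + \<beta>*a*c + \<gamma>*c^2"
proof -
  have "n dvd n*\<alpha>*a^2 + \<beta>*a*c + \<gamma>*c^2"
    using assms(1) by (simp add: power2_eq_square)
  then show ?thesis by simp
qed

lemma act_comp:
  fixes n :: int
  assumes "n \<noteq> 0" "g \<in> Gamma0 n" "h \<in> Gamma0 n"
  shows "act n h (act n g q) = act n (mm g h) q"
proof -
  obtain a b c d where g: "g = (a,b,c,d)" by (cases g) auto
  obtain a' b' c' d' where h: "h = (a',b',c',d')" by (cases h) auto
  obtain \<alpha> \<beta> \<gamma> r t where q: "q = (\<alpha>,\<beta>,\<gamma>,r,t)" by (cases q) auto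
  have c: "n dvd c" and c': "n dvd c'" using assms g h by (auto simp: Gamma0_def)
  define A where "A = (n*\<alpha>*a^2 + \<beta>*a*c + \<gamma>*c^2) div n"
  have nA: "n * A = n*\<alpha>*a^2 + \<beta>*a*c + \<gamma>*c^2" unfolding A_def using divn[OF c assms(1)] .
  define \<beta>1 where "\<beta>1 = 2 * n * \<alpha> * a * b + \<beta> * (a * d + b * c) + 2 * \<gamma> * c * d"
  define \<gamma>1 where "\<gamma>1 = n * \<alpha> * b^2 + \<beta> * b * d + \<gamma> * d^2"
  have e1: "n * A * a'^2 + \<beta>1 * a' * c' + \<gamma>1 * c'^2
    = n * \<alpha> * (a*a' + b*c')^2 + \<beta> * (a*a' + b*c') * (c*a' + d*c') + \<gamma> * (c*a' + d*c')^2"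
    unfolding nA \<beta>1_def \<gamma>1_def by (simp add: algebra_simps power2_eq_square)
  have h2: "2 * n * A * a' * b' = 2 * (n * A) * a' * b'" by (simp add: mult.assoc)
  have e2: "2 * n * A * a' * b' + \<beta>1 * (a' * d' + b' * c') + 2 * \<gamma>1 * c' * d'
    = 2 * n * \<alpha> * (a*a' + b*c') * (a*b' + b*d') + \<beta> * ((a*a' + b*c') * (c*b' + d*d') + (a*b' + b*d') * (c*a' + d*c')) + 2 * \<gamma> * (c*a' + d*c') * (c*b' + d*d')"
    unfolding h2 nA \<beta>1_def \<gamma>1_def
    by (simp add: algebra_simps power2_eq_square)
  have e3: "n * A * b'^2 + \<beta>1 * b' * d' + \<gamma>1 * d'^2
    = n * \<alpha> * (a*b' + b*d')^2 + \<beta> * (a*b' + b*d') * (c*b' + d*d') + \<gamma> * (c*b' + d*d')^2"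
    unfolding nA \<beta>1_def \<gamma>1_def
    by (simp add: algebra_simps power2_eq_square)
  show ?thesis
    unfolding g h q act_def mm_def
    apply (simp only: prod.case flip: A_def \<beta>1_def \<gamma>1_def)
    apply (simp only: e1 e2 e3 prod.inject)
    by (simp add: algebra_simps)
qed


lemma mm_Gamma0:
  assumes "g \<in> Gamma0 n" "h \<in> Gamma0 n"
  shows "mm g h \<in> Gamma0 n"
proof -
  obtain a b c d where g: "g = (a,b,c,d)" by (cases g) auto
  obtain a' b' c' d' where h: "h = (a',b',c',d')" by (cases h) auto
  have 1: "a*d - b*c = 1" "n dvd c" "a'*d' - b'*c' = 1" "n dvd c'"
    using assms g h by (auto simp: Gamma0_def)
  have "(a*a' + b*c') * (c*b' + d*d') - (a*b' + b*d') * (c*a' + d*c') = (a*d - b*c) * (a'*d' - b'*c')"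
    by (simp add: algebra_simps)
  also have "\<dots> = 1" using 1 by simp
  finally show ?thesis using 1 unfolding g h mm_def Gamma0_def by auto
qed

lemma act_id:
  assumes "n \<noteq> 0"
  shows "act n (1,0,0,1) q = q"
  using assms by (cases q) (auto simp: act_def)

lemma id_Gamma0: "(1,0,0,1) \<in> Gamma0 n"
  by (simp add: Gamma0_def)

lemma orbit_act:
  assumes "n \<noteq> 0" "g \<in> Gamma0 n"
  shows "orbit n (act n g q) = orbit n q"
proof
  show "orbit n (act n g q) \<subseteq> orbit n q"
    unfolding orbit_def using act_comp[OF assms(1) assms(2)] mm_Gamma0[OF assms(2)] by auto
next
  obtain a b c d where g: "g = (a,b,c,d)" by (cases g) auto
  have 1: "a*d - b*c = 1" "n dvd c" using assms g by (auto simp: Gamma0_def)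
  define gi where "gi = (d, -b, -c, a)"
  have gi: "gi \<in> Gamma0 n" using 1 by (simp add: gi_def Gamma0_def algebra_simps)
  show "orbit n q \<subseteq> orbit n (act n g q)"
  proof
    fix x assume "x \<in> orbit n q"
    then obtain h where h: "h \<in> Gamma0 n" "x = act n h q" by (auto simp: orbit_def)
    obtain a' b' c' d' where hh: "h = (a',b',c',d')" by (cases h) auto
    have "mm g (mm gi h) = h"
    proof -
      have "a * (d * a' + - b * c') + b * (- c * a' + a * c') = (a*d - b*c) * a'"
           "a * (d * b' + - b * d') + b * (- c * b' + a * d') = (a*d - b*c) * b'"
           "c * (d * a' + - b * c') + d * (- c * a' + a * c') = (a*d - b*c) * c'"
           "c * (d * b' + - b * d') + d * (- c * b' + a * d') = (a*d - b*c) * d'"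
        by (simp_all add: algebra_simps)
      then show ?thesis using 1 unfolding g gi_def hh mm_def by simp
    qed
    then have "x = act n (mm gi h) (act n g q)"
      using act_comp[OF assms(1) assms(2) mm_Gamma0[OF gi h(1)]] h(2) by simp
    then show "x \<in> orbit n (act n g q)"
      unfolding orbit_def using mm_Gamma0[OF gi h(1)] by auto
  qed
qed

lemma act_disc:
  fixes n :: int
  assumes "n \<noteq> 0" "(a,b,c,d) \<in> Gamma0 n" "act n (a,b,c,d) (\<alpha>,\<beta>,\<gamma>,r,t) = (\<alpha>',\<beta>',\<gamma>',r',t')"
  shows "\<beta>'^2 - 4*n*\<alpha>'*\<gamma>' = \<beta>^2 - 4*n*\<alpha>*\<gamma>"
    and "n*\<alpha>' = qform n \<alpha> \<beta> \<gamma> a c"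
    and "r' = d*r - b*t" and "t' = -c*r + a*t"
proof -
  have 1: "a*d - b*c = 1" "n dvd c" using assms by (auto simp: Gamma0_def)
  have e: "\<alpha>' = (n*\<alpha>*a^2 + \<beta>*a*c + \<gamma>*c^2) div n"
    "\<beta>' = 2 * n * \<alpha> * a * b + \<beta> * (a * d + b * c) + 2 * \<gamma> * c * d"
    "\<gamma>' = n * \<alpha> * b^2 + \<beta> * b * d + \<gamma> * d^2"
    "r' = d*r - b*t" "t' = -c*r + a*t"
    using assms(3) by (auto simp: act_def)
  have nA: "n*\<alpha>' = n*\<alpha>*a^2 + \<beta>*a*c + \<gamma>*c^2" using e(1) divn[OF 1(2) assms(1)] by simp
  then show "n*\<alpha>' = qform n \<alpha> \<beta> \<gamma> a c" by (simp add: qform_def)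
  show "r' = d*r - b*t" "t' = -c*r + a*t" using e by auto
  have "\<beta>'^2 - 4*(n*\<alpha>')*\<gamma>' = (a*d - b*c)^2 * (\<beta>^2 - 4*n*\<alpha>*\<gamma>)"
    unfolding nA e(2,3) by (simp add: algebra_simps power2_eq_square)
  then show "\<beta>'^2 - 4*n*\<alpha>'*\<gamma>' = \<beta>^2 - 4*n*\<alpha>*\<gamma>" using 1 by (simp add: mult.assoc)
qed


theorem lemma5:
  fixes n C D :: int
  assumes "n \<ge> 1" and "C > 0" and "D < 0"
  shows "\<exists>f. bij_betw f {m::int. 0 \<le> m \<and> m < 2 * n * C \<and> [m^2 = D] (mod (4 * n * C))}
                       (orbits n C D)"
proof -
  define S where "S = {m::int. 0 \<le> m \<and> m < 2 * n * C \<and> [m^2 = D] (mod (4 * n * C))}"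
  define gf where "gf m = (m^2 - D) div (4*n*C)" for m
  define qm where "qm m = (C, m, gf m, 1::int, 0::int)" for m
  define f where "f m = orbit n (qm m)" for m
  have n0: "n \<noteq> 0" using assms by simp
  have pos: "4*n*C > 0" using assms by simp
  have gfE: "4*n*C * gf m = m^2 - D" if "m \<in> S" for m
  proof -
    have "4*n*C dvd m^2 - D" using that by (simp add: S_def cong_iff_dvd_diff)
    then show ?thesis by (simp add: gf_def)
  qed
  have qmQ: "qm m \<in> Qn n C D" if "m \<in> S" for m
  proof -
    have "m^2 - D > 0" using assms(3) by (smt (verit) zero_le_power2)
    then have "4*n*C * gf m > 0" using gfE[OF that] by simp
    then have "gf m > 0" using pos by (metis zero_less_mult_pos)
    then show ?thesis using gfE[OF that] assms by (simp add: qm_def Qn_def qform_def algebra_simps)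
  qed
  have self: "q \<in> orbit n q" for q
    using act_id[OF n0, of q] id_Gamma0[of n] unfolding orbit_def by force
  have inj: "inj_on f S"
  proof (rule inj_onI)
    fix m1 m2 assume m: "m1 \<in> S" "m2 \<in> S" "f m1 = f m2"
    then have "qm m2 \<in> orbit n (qm m1)" using self[of "qm m2"] by (simp add: f_def)
    then obtain g where g: "g \<in> Gamma0 n" "act n g (qm m1) = qm m2" by (auto simp: orbit_def)
    obtain a b c d where gg: "g = (a,b,c,d)" by (cases g) auto
    have det: "a*d - b*c = 1" using g gg by (simp add: Gamma0_def)
    have "d = 1" "c = 0" using g(2) unfolding gg qm_def act_def by auto
    with det have "a = 1" by simp
    with \<open>d = 1\<close> \<open>c = 0\<close> g(2) have "m2 = 2*n*C*b + m1" unfolding gg qm_def act_def by auto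
    moreover have "0 \<le> m1" "m1 < 2*n*C" "0 \<le> m2" "m2 < 2*n*C" using m by (auto simp: S_def)
    moreover have Np: "2*n*C > 0" using assms by simp
    moreover have "2*n*C*b \<ge> 2*n*C" if "b \<ge> 1"
      using mult_left_mono[OF that, of "2*n*C"] Np by simp
    moreover have "2*n*C*b \<le> -(2*n*C)" if "b \<le> -1"
      using mult_left_mono[OF that, of "2*n*C"] Np by simp
    ultimately have "b = 0" by linarith
    then show "m1 = m2" using \<open>m2 = 2*n*C*b + m1\<close> by simp
  qed
  have img1: "f ` S \<subseteq> orbits n C D"
    using qmQ unfolding orbits_def f_def by auto
  have img2: "orbits n C D \<subseteq> f ` S"
  proof
    fix Orb assume "Orb \<in> orbits n C D"
    then obtain q where q: "q \<in> Qn n C D" "Orb = orbit n q" by (auto simp: orbits_def)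
    obtain \<alpha> \<beta> \<gamma> r t where qq: "q = (\<alpha>,\<beta>,\<gamma>,r,t)" by (cases q) auto
    have Q: "\<beta>^2 - 4*n*\<alpha>*\<gamma> = D" "n dvd t" "gcd r t = 1" "qform n \<alpha> \<beta> \<gamma> r t = n*C"
      using q(1) qq by (auto simp: Qn_def)
    obtain u v where uv: "u*r + v*t = 1" using bezout_int[of r t] Q(3) by auto
    define g0 where "g0 = (r, -v, t, u)"
    have g0: "g0 \<in> Gamma0 n" using uv Q(2) by (simp add: g0_def Gamma0_def algebra_simps)
    obtain \<alpha>0 \<beta>0 \<gamma>0 r0 t0 where q0: "act n g0 q = (\<alpha>0,\<beta>0,\<gamma>0,r0,t0)" by (cases "act n g0 q") auto
    note ad = act_disc[OF n0 g0[unfolded g0_def] q0[unfolded g0_def qq]]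
    have "n*\<alpha>0 = n*C" using ad(2) Q(4) by simp
    then have a0: "\<alpha>0 = C" using n0 by simp
    have r0: "r0 = 1" "t0 = 0" using ad(3,4) uv by (auto simp: algebra_simps)
    have disc0: "\<beta>0^2 - 4*n*C*\<gamma>0 = D" using ad(1) Q(1) a0 by simp
    define N where "N = 2*n*C"
    define m where "m = \<beta>0 mod N"
    define k where "k = \<beta>0 div N"
    have Npos: "N > 0" using assms by (simp add: N_def)
    have bm: "\<beta>0 = m + N*k" by (simp add: m_def k_def)
    have mr: "0 \<le> m" "m < N" using Npos by (auto simp: m_def)
    have sq: "m^2 - D = 4*n*C*(\<gamma>0 - m*k - n*C*k^2)"
      using disc0 unfolding bm N_def by (simp add: algebra_simps power2_eq_square)
    have mS: "m \<in> S" using mr sq unfolding S_def N_def by (simp add: cong_iff_dvd_diff)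
    have "gf m = \<gamma>0 - m*k - n*C*k^2" using sq pos n0 assms(2) by (simp add: gf_def)
    then have "act n (1,k,0,1) (qm m) = (\<alpha>0,\<beta>0,\<gamma>0,r0,t0)"
      unfolding a0 r0 qm_def act_def using n0 bm
      by (simp add: N_def algebra_simps power2_eq_square)
    moreover have "(1,k,0,1) \<in> Gamma0 n" by (simp add: Gamma0_def)
    ultimately have "orbit n (qm m) = orbit n q"
      using orbit_act[OF n0] g0 q0 by metis
    then show "Orb \<in> f ` S" using q(2) mS unfolding f_def by auto
  qed
  have "bij_betw f S (orbits n C D)"
    unfolding bij_betw_def using inj img1 img2 by auto
  then show ?thesis unfolding S_def by blast
qed

end
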